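(* Let $G$ be a connected graph, let $\mathcal{P}=(X_1,\ldots,X_l)$ be a path decomposition of $G$ of width $k\leq 3$, and let $S$ be a bottleneck set. Then $t_1(S)$ and $t_2(S)$ are well-defined (the sets over which the minimum and maximum are taken are nonempty) and $t_1(S)\leq t_2(S)$, so $I(S)$ is nonempty; moreover: (i) there is at least one green $S$-branch; (ii) the number of $S$-branches colored red, purple or gray is at most $2k$; (iii) the number of $S$-branches colored blue, purple or black is at most $2k$.
   Context: A path decomposition of $G$ is a sequence $(X_1,\ldots,X_l)$ of subsets of $V(G)$ covering $V(G)$, such that every edge lies in some $X_i$, and $X_i\cap X_k\subseteq X_j$ whenever $i\leq j\leq k$; width is $\max_i|X_i|-1$. For a subgraph $H$, $\alpha(H)=\min\{i: X_i\cap V(H)\neq\emptyset\}$, $\beta(H)=\max\{i: X_i\cap V(H)\neq\emptyset\}$. For $S\subseteq V(G)$, an $S$-component is a connected component $H$ of $G-S$ such that every vertex of $S$ has a neighbor in $V(H)$; an $S$-branch is an $S$-component with at least two vertices. $S$ is a bottleneck set if $S\neq\emptyset$ and there are at least $13$ $S$-branches. Define $t_1(S)=\min\{\alpha(H): H \text{ an } S\text{-branch with } S\subseteq X_{\alpha(H)}\cap X_{\alpha(H)-1}\}$ and $t_2(S)=\max\{\beta(H): H \text{ an } S\text{-branch with } S\subseteq X_{\beta(H)}\cap X_{\beta(H)+1}\}$ (with $X_0=X_{l+1}=\emptyset$), and $I(S)=\{t_1(S),\ldots,t_2(S)\}$. Each $S$-branch $H$ is colored: green if $t_1(S)\leq\alpha(H)\leq\beta(H)\leq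 t_2(S)$; red if $\alpha(H)<t_1(S)\leq\beta(H)\leq t_2(S)$; blue if $t_1(S)\leq\alpha(H)\leq t_2(S)<\beta(H)$; purple if $\alpha(H)<t_1(S)\leq t_2(S)<\beta(H)$; gray if $\beta(H)<t_1(S)$; black if $\alpha(H)>t_2(S)$. *)

theory Defs
  imports Main
begin

definition graph :: "'a set \<Rightarrow> ('a \<Rightarrow> 'a \<Rightarrow> bool) \<Rightarrow> bool" where
  "graph V E \<longleftrightarrow> finite V \<and> (\<forall>u v. E u v \<longrightarrow> u \<in> V \<and> v \<in> V)
     \<and> (\<forall>u v. E u v \<longrightarrow> E v u) \<and> (\<forall>u. \<not> E u u)"

definition conn_in :: "('a \<Rightarrow> 'a \<Rightarrow> bool) \<Rightarrow> 'a set \<Rightarrow> 'a \<Rightarrow> 'a \<Rightarrow> bool" where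
  "conn_in E A = (\<lambda>x y. E x y \<and> x \<in> A \<and> y \<in> A)\<^sup>*\<^sup>*"

definition connected_graph :: "'a set \<Rightarrow> ('a \<Rightarrow> 'a \<Rightarrow> bool) \<Rightarrow> bool" where
  "connected_graph V E \<longleftrightarrow> V \<noteq> {} \<and> (\<forall>u\<in>V. \<forall>v\<in>V. conn_in E V u v)"

definition component_of :: "'a set \<Rightarrow> ('a \<Rightarrow> 'a \<Rightarrow> bool) \<Rightarrow> 'a set \<Rightarrow> 'a set \<Rightarrow> bool" where
  "component_of V E S C \<longleftrightarrow> (\<exists>v \<in> V - S. C = {u. conn_in E (V - S) v u})"

definition S_component :: "'a set \<Rightarrow> ('a \<Rightarrow> 'a \<Rightarrow> bool) \<Rightarrow> 'a set \<Rightarrow> 'a set \<Rightarrow> bool" where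
  "S_component V E S C \<longleftrightarrow> component_of V E S C \<and> (\<forall>s\<in>S. \<exists>c\<in>C. E s c)"

definition S_branch :: "'a set \<Rightarrow> ('a \<Rightarrow> 'a \<Rightarrow> bool) \<Rightarrow> 'a set \<Rightarrow> 'a set \<Rightarrow> bool" where
  "S_branch V E S C \<longleftrightarrow> S_component V E S C \<and> card C \<ge> 2"

definition bottleneck :: "'a set \<Rightarrow> ('a \<Rightarrow> 'a \<Rightarrow> bool) \<Rightarrow> 'a set \<Rightarrow> bool" where
  "bottleneck V E S \<longleftrightarrow> S \<noteq> {} \<and> S \<subseteq> V \<and> card {C. S_branch V E S C} \<ge> 13"

definition path_decomposition ::
  "'a set \<Rightarrow> ('a \<Rightarrow> 'a \<Rightarrow> bool) \<Rightarrow> (nat \<Rightarrow> 'a set) \<Rightarrow> nat \<Rightarrow> bool" where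
  "path_decomposition V E X l \<longleftrightarrow>
     (\<forall>i\<in>{1..l}. X i \<subseteq> V) \<and> (\<Union>i\<in>{1..l}. X i) = V
     \<and> (\<forall>u v. E u v \<longrightarrow> (\<exists>i\<in>{1..l}. u \<in> X i \<and> v \<in> X i))
     \<and> (\<forall>i j k. 1 \<le> i \<and> i \<le> j \<and> j \<le> k \<and> k \<le> l \<longrightarrow> X i \<inter> X k \<subseteq> X j)"

definition pd_width :: "(nat \<Rightarrow> 'a set) \<Rightarrow> nat \<Rightarrow> nat" where
  "pd_width X l = Max ((\<lambda>i. card (X i)) ` {1..l}) - 1"

text \<open>Bags with the convention X_0 = X_(l+1) = {} (and empty outside 1..l).\<close>
definition bag :: "(nat \<Rightarrow> 'a set) \<Rightarrow> nat \<Rightarrow> nat \<Rightarrow> 'a set" where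
  "bag X l i = (if 1 \<le> i \<and> i \<le> l then X i else {})"

definition alpha :: "(nat \<Rightarrow> 'a set) \<Rightarrow> nat \<Rightarrow> 'a set \<Rightarrow> nat" where
  "alpha X l H = Min {i\<in>{1..l}. X i \<inter> H \<noteq> {}}"

definition beta :: "(nat \<Rightarrow> 'a set) \<Rightarrow> nat \<Rightarrow> 'a set \<Rightarrow> nat" where
  "beta X l H = Max {i\<in>{1..l}. X i \<inter> H \<noteq> {}}"

definition T1set :: "'a set \<Rightarrow> ('a \<Rightarrow> 'a \<Rightarrow> bool) \<Rightarrow> (nat \<Rightarrow> 'a set) \<Rightarrow> nat \<Rightarrow> 'a set \<Rightarrow> nat set" where
  "T1set V E X l S = {alpha X l H | H. S_branch V E S H \<and>
      S \<subseteq> bag X l (alpha X l H) \<inter> bag X l (alpha X l H - 1)}"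

definition T2set :: "'a set \<Rightarrow> ('a \<Rightarrow> 'a \<Rightarrow> bool) \<Rightarrow> (nat \<Rightarrow> 'a set) \<Rightarrow> nat \<Rightarrow> 'a set \<Rightarrow> nat set" where
  "T2set V E X l S = {beta X l H | H. S_branch V E S H \<and>
      S \<subseteq> bag X l (beta X l H) \<inter> bag X l (beta X l H + 1)}"

definition t1 :: "'a set \<Rightarrow> ('a \<Rightarrow> 'a \<Rightarrow> bool) \<Rightarrow> (nat \<Rightarrow> 'a set) \<Rightarrow> nat \<Rightarrow> 'a set \<Rightarrow> nat" where
  "t1 V E X l S = Min (T1set V E X l S)"

definition t2 :: "'a set \<Rightarrow> ('a \<Rightarrow> 'a \<Rightarrow> bool) \<Rightarrow> (nat \<Rightarrow> 'a set) \<Rightarrow> nat \<Rightarrow> 'a set \<Rightarrow> nat" where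
  "t2 V E X l S = Max (T2set V E X l S)"

definition I_S :: "'a set \<Rightarrow> ('a \<Rightarrow> 'a \<Rightarrow> bool) \<Rightarrow> (nat \<Rightarrow> 'a set) \<Rightarrow> nat \<Rightarrow> 'a set \<Rightarrow> nat set" where
  "I_S V E X l S = {t1 V E X l S .. t2 V E X l S}"

definition green where
  "green V E X l S H \<longleftrightarrow> t1 V E X l S \<le> alpha X l H \<and> alpha X l H \<le> beta X l H \<and> beta X l H \<le> t2 V E X l S"
definition red where
  "red V E X l S H \<longleftrightarrow> alpha X l H < t1 V E X l S \<and> t1 V E X l S \<le> beta X l H \<and> beta X l H \<le> t2 V E X l S"
definition blue where
  "blue V E X l S H \<longleftrightarrow> t1 V E X l S \<le> alpha X l H \<and> alpha X l H \<le> t2 V E X l S \<and> t2 V E X l S < beta X l H"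
definition purple where
  "purple V E X l S H \<longleftrightarrow> alpha X l H < t1 V E X l S \<and> t1 V E X l S \<le> t2 V E X l S \<and> t2 V E X l S < beta X l H"
definition gray where
  "gray V E X l S H \<longleftrightarrow> beta X l H < t1 V E X l S"
definition black where
  "black V E X l S H \<longleftrightarrow> alpha X l H > t2 V E X l S"

end

theory Submission
  imports Defs
begin

lemma conn_sym:
  assumes sym: "\<And>u v. E u v \<Longrightarrow> E v u" and c: "conn_in E A x y"
  shows "conn_in E A y x"
  using c unfolding conn_in_def
proof (induction rule: rtranclp_induct)
  case base then show ?case by simp
next
  case (step y z)
  have "(\<lambda>x y. E x y \<and> x \<in> A \<and> y \<in> A) z y" using sym step.hyps(2) by blast
  then show ?case by (rule converse_rtranclp_into_rtranclp[OF _ step.IH])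
qed

lemma conn_trans: "conn_in E A x y \<Longrightarrow> conn_in E A y z \<Longrightarrow> conn_in E A x z"
  unfolding conn_in_def by (meson rtranclp_trans)

lemma conn_mem: "conn_in E A v u \<Longrightarrow> v \<in> A \<Longrightarrow> u \<in> A"
  unfolding conn_in_def by (induction rule: rtranclp_induct) auto

context
  fixes V E X l S
  assumes G: "graph V E" and PD: "path_decomposition V E X l" and BN: "bottleneck V E S"
begin

lemma finV: "finite V" using G unfolding graph_def by (elim conjE)
lemma symE: "E u v \<Longrightarrow> E v u" using G unfolding graph_def by (elim conjE) blast
lemma PD1: "\<forall>i\<in>{1..l}. X i \<subseteq> V" and PD2: "(\<Union>i\<in>{1..l}. X i) = V"
  and PD3: "\<forall>u v. E u v \<longrightarrow> (\<exists>i\<in>{1..l}. u \<in> X i \<and> v \<in> X i)"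
  and PD4: "\<forall>i j k. 1 \<le> i \<and> i \<le> j \<and> j \<le> k \<and> k \<le> l \<longrightarrow> X i \<inter> X k \<subseteq> X j"
  using PD unfolding path_decomposition_def by blast+
lemma Xsub: "i \<in> {1..l} \<Longrightarrow> X i \<subseteq> V" using PD1 by blast
lemma finX: "i \<in> {1..l} \<Longrightarrow> finite (X i)" using Xsub finV finite_subset by blast
lemma cover: "v \<in> V \<Longrightarrow> \<exists>i\<in>{1..l}. v \<in> X i" using PD2 by blast
lemma edgeb: "E u v \<Longrightarrow> \<exists>i\<in>{1..l}. u \<in> X i \<and> v \<in> X i"
  using PD3 by blast
lemma interp: "1 \<le> i \<Longrightarrow> i \<le> j \<Longrightarrow> j \<le> k \<Longrightarrow> k \<le> l \<Longrightarrow> v \<in> X i \<Longrightarrow> v \<in> X k \<Longrightarrow> v \<in> X j"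
proof -
  assume h: "1 \<le> i" "i \<le> j" "j \<le> k" "k \<le> l" "v \<in> X i" "v \<in> X k"
  have "X i \<inter> X k \<subseteq> X j" using PD4 h(1-4) by blast
  then show ?thesis using h(5,6) by blast
qed
lemma SV: "S \<subseteq> V" and Sne: "S \<noteq> {}" and many: "card {C. S_branch V E S C} \<ge> 13"
  using BN unfolding bottleneck_def by blast+
lemma finS: "finite S" using SV finV finite_subset by blast

lemma branch_def': assumes "S_branch V E S H"
  obtains v where "v \<in> V - S" "H = {u. conn_in E (V - S) v u}"
proof -
  have "component_of V E S H" using assms unfolding S_branch_def S_component_def by simp
  then show ?thesis using that unfolding component_of_def by blast
qed

lemma branch_sub: assumes b: "S_branch V E S H" shows "H \<subseteq> V - S"
proof
  fix x assume x: "x \<in> H"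
  obtain v where v: "v \<in> V - S" "H = {u. conn_in E (V - S) v u}" using b by (rule branch_def')
  have "conn_in E (V - S) v x" using x v(2) by simp
  then show "x \<in> V - S" using v(1) by (rule conn_mem)
qed

lemma csym: "conn_in E A x y \<Longrightarrow> conn_in E A y x"
  by (rule conn_sym[OF symE])

lemma branch_ne: "S_branch V E S H \<Longrightarrow> H \<noteq> {}"
proof
  assume "S_branch V E S H" "H = {}"
  then have "card H \<ge> 2" "card H = 0" unfolding S_branch_def by simp_all
  then show False by simp
qed

lemma branch_nbr: "S_branch V E S H \<Longrightarrow> s \<in> S \<Longrightarrow> \<exists>c\<in>H. E s c"
  unfolding S_branch_def S_component_def by blast

lemma fin_branches: "finite {C. S_branch V E S C}"
proof -
  have "{C. S_branch V E S C} \<subseteq> Pow V"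
  proof
    fix C assume "C \<in> {C. S_branch V E S C}"
    then have "C \<subseteq> V - S" using branch_sub by simp
    then show "C \<in> Pow V" by blast
  qed
  moreover have "finite (Pow V)" using finV by simp
  ultimately show ?thesis by (rule finite_subset)
qed

lemma branch_disj: assumes "S_branch V E S H1" "S_branch V E S H2" "x \<in> H1" "x \<in> H2"
  shows "H1 = H2"
proof -
  obtain v1 where v1: "H1 = {u. conn_in E (V - S) v1 u}" using assms(1) branch_def' by blast
  obtain v2 where v2: "H2 = {u. conn_in E (V - S) v2 u}" using assms(2) branch_def' by blast
  have c1: "conn_in E (V - S) v1 x" "conn_in E (V - S) v2 x" using assms(3,4) unfolding v1 v2 by simp_all
  have e: "{u. conn_in E (V - S) v u} = {u. conn_in E (V - S) x u}" if "conn_in E (V - S) v x" for v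
  proof (intro set_eqI iffI; simp)
    fix u assume "conn_in E (V - S) v u"
    then show "conn_in E (V - S) x u" using conn_trans[OF csym[OF that]] by blast
  next
    fix u assume "conn_in E (V - S) x u"
    then show "conn_in E (V - S) v u" using conn_trans[OF that] by blast
  qed
  have "H1 = {u. conn_in E (V - S) x u}" using e[OF c1(1)] v1 by simp
  moreover have "H2 = {u. conn_in E (V - S) x u}" using e[OF c1(2)] v2 by simp
  ultimately show ?thesis by simp
qed

definition Idx where "Idx H = {i\<in>{1..l}. X i \<inter> H \<noteq> {}}"

lemma Idx_ne: "S_branch V E S H \<Longrightarrow> Idx H \<noteq> {}"
proof -
  assume b: "S_branch V E S H"
  obtain x where "x \<in> H" using branch_ne[OF b] by blast
  then have "x \<in> V" using branch_sub[OF b] by blast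
  then obtain i where "i \<in> {1..l}" "x \<in> X i" using cover by blast
  then show ?thesis unfolding Idx_def using \<open>x \<in> H\<close> by blast
qed

lemma Idx_fin: "finite (Idx H)" unfolding Idx_def by auto

lemma alpha_eq: "alpha X l H = Min (Idx H)" unfolding alpha_def Idx_def by simp
lemma beta_eq: "beta X l H = Max (Idx H)" unfolding beta_def Idx_def by simp
lemma alpha_in: "S_branch V E S H \<Longrightarrow> alpha X l H \<in> Idx H"
  unfolding alpha_eq using Idx_ne Idx_fin by (rule Min_in[rotated])
lemma beta_in: "S_branch V E S H \<Longrightarrow> beta X l H \<in> Idx H"
  unfolding beta_eq using Idx_ne Idx_fin by (rule Max_in[rotated])
lemma alpha_le: "i \<in> Idx H \<Longrightarrow> alpha X l H \<le> i"
  unfolding alpha_eq using Idx_fin by (rule Min_le)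
lemma beta_ge: "i \<in> Idx H \<Longrightarrow> i \<le> beta X l H"
  unfolding beta_eq using Idx_fin by (rule Max_ge)
lemma alpha_beta: "S_branch V E S H \<Longrightarrow> alpha X l H \<le> beta X l H"
  using alpha_in beta_ge by blast

lemma contig: assumes b: "S_branch V E S H" and i1: "alpha X l H \<le> i" and i2: "i \<le> beta X l H"
  shows "X i \<inter> H \<noteq> {}"
proof (rule ccontr)
  assume em: "\<not> X i \<inter> H \<noteq> {}"
  obtain v where v: "v \<in> V - S" "H = {u. conn_in E (V - S) v u}" using b branch_def' by blast
  have ai: "alpha X l H \<in> Idx H" "beta X l H \<in> Idx H" using alpha_in beta_in b by auto
  then have il: "1 \<le> i" "i \<le> l" using i1 i2 unfolding Idx_def by auto
  define side where "side u = (\<exists>j. 1 \<le> j \<and> j < i \<and> u \<in> X j)" for u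
  have key: "side u = side v" if "conn_in E (V - S) v u" for u
    using that unfolding conn_in_def
  proof (induction rule: rtranclp_induct)
    case base then show ?case by simp
  next
    case (step x y)
    have xH: "x \<in> H" "y \<in> H" using step.hyps v(2) unfolding conn_in_def
      by (auto intro: rtranclp.rtrancl_into_rtrancl)
    then have nx: "x \<notin> X i" "y \<notin> X i" using em by auto
    obtain m where m: "m \<in> {1..l}" "x \<in> X m" "y \<in> X m" using edgeb step.hyps(2) by blast
    have "m \<noteq> i" using nx m by auto
    have "side x = side y"
    proof (cases "m < i")
      case True then show ?thesis unfolding side_def using m by auto
    next
      case False
      then have "i < m" using \<open>m \<noteq> i\<close> by simp
      have "\<not> side z" if "z \<in> X m" "z \<notin> X i" for z
      proof
        assume "side z"
        then obtain j where "1 \<le> j" "j < i" "z \<in> X j" unfolding side_def by blast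
        then have "z \<in> X i" using interp[of j i m z] that \<open>i < m\<close> m(1) by simp
        then show False using that by simp
      qed
      then show ?thesis using m nx by blast
    qed
    then show ?case using step.IH by simp
  qed
  obtain u where u: "u \<in> X (alpha X l H)" "u \<in> H" using ai(1) unfolding Idx_def by auto
  obtain w where w: "w \<in> X (beta X l H)" "w \<in> H" using ai(2) unfolding Idx_def by auto
  have "alpha X l H \<noteq> i" using u em by auto
  then have "alpha X l H < i" "1 \<le> alpha X l H" using i1 ai(1) unfolding Idx_def by auto
  then have "side u" unfolding side_def using u(1) by blast
  have "beta X l H \<noteq> i" using w em by auto
  have bl: "beta X l H \<le> l" using ai(2) unfolding Idx_def by simp
  have "\<not> side w"
  proof
    assume "side w"
    then obtain j where "1 \<le> j" "j < i" "w \<in> X j" unfolding side_def by blast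
    then have "w \<in> X i" using interp[of j i "beta X l H" w] w i2 bl by simp
    then show False using w em by blast
  qed
  have "side u = side v" using key u(2) v(2) by blast
  moreover have "side w = side v" using key w(2) v(2) by blast
  ultimately show False using \<open>side u\<close> \<open>\<not> side w\<close> by simp
qed

lemma count_meet: assumes "i \<in> {1..l}"
  shows "card {H. S_branch V E S H \<and> X i \<inter> H \<noteq> {}} \<le> card (X i - S)"
proof -
  define f where "f H = (SOME x. x \<in> X i \<inter> H)" for H
  let ?A = "{H. S_branch V E S H \<and> X i \<inter> H \<noteq> {}}"
  have fin: "f H \<in> X i \<inter> H" if "H \<in> ?A" for H
  proof -
    have "\<exists>x. x \<in> X i \<inter> H" using that by blast
    then show ?thesis unfolding f_def by (rule someI_ex)
  qed
  have "inj_on f ?A"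
  proof (rule inj_onI)
    fix H1 H2 assume h: "H1 \<in> ?A" "H2 \<in> ?A" "f H1 = f H2"
    have "f H1 \<in> H1" "f H1 \<in> H2" using fin[OF h(1)] fin[OF h(2)] h(3) by auto
    then show "H1 = H2" using branch_disj h(1,2) by blast
  qed
  moreover have "f ` ?A \<subseteq> X i - S" using fin branch_sub by blast
  ultimately show ?thesis using card_inj_on_le finX[OF assms] by blast
qed


definition J where "J s = {i\<in>{1..l}. s \<in> X i}"
definition aa where "aa s = Min (J s)"
definition bb where "bb s = Max (J s)"

lemma J_fin: "finite (J s)" unfolding J_def by simp
lemma J_ne: assumes "s \<in> S" shows "J s \<noteq> {}"
proof -
  have "s \<in> V" using assms SV by blast
  then obtain i where "i \<in> {1..l}" "s \<in> X i" using cover by blast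
  then show ?thesis unfolding J_def by blast
qed
lemma aa_in: "s \<in> S \<Longrightarrow> aa s \<in> J s" unfolding aa_def using J_ne J_fin by (rule Min_in[rotated])
lemma bb_in: "s \<in> S \<Longrightarrow> bb s \<in> J s" unfolding bb_def using J_ne J_fin by (rule Max_in[rotated])
lemma aa_le: "i \<in> J s \<Longrightarrow> aa s \<le> i" unfolding aa_def using J_fin by (rule Min_le)
lemma bb_ge: "i \<in> J s \<Longrightarrow> i \<le> bb s" unfolding bb_def using J_fin by (rule Max_ge)

lemma nbr_bounds: assumes b: "S_branch V E S H" and s: "s \<in> S"
  shows "alpha X l H \<le> bb s" "aa s \<le> beta X l H"
proof -
  obtain c where c: "c \<in> H" "E s c" using branch_nbr[OF b s] by blast
  obtain m where m: "m \<in> {1..l}" "s \<in> X m" "c \<in> X m" using edgeb[OF c(2)] by blast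
  have mJ: "m \<in> J s" unfolding J_def using m by simp
  have mI: "m \<in> Idx H" unfolding Idx_def using m c by blast
  show "alpha X l H \<le> bb s" using alpha_le[OF mI] bb_ge[OF mJ] by simp
  show "aa s \<le> beta X l H" using beta_ge[OF mI] aa_le[OF mJ] by simp
qed

definition pp where "pp = Max (aa ` S)"
definition qq where "qq = Min (bb ` S)"

lemma pp_obt: "\<exists>s\<in>S. pp = aa s"
proof -
  have "pp \<in> aa ` S" unfolding pp_def using finS Sne by (intro Max_in) simp_all
  then show ?thesis by blast
qed
lemma qq_obt: "\<exists>s\<in>S. qq = bb s"
proof -
  have "qq \<in> bb ` S" unfolding qq_def using finS Sne by (intro Min_in) simp_all
  then show ?thesis by blast
qed
lemma aa_pp: "s \<in> S \<Longrightarrow> aa s \<le> pp" unfolding pp_def using finS by (intro Max_ge) simp_all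
lemma bb_qq: "s \<in> S \<Longrightarrow> qq \<le> bb s" unfolding qq_def using finS by (intro Min_le) simp_all

lemma alpha_qq: "S_branch V E S H \<Longrightarrow> alpha X l H \<le> qq"
  using qq_obt nbr_bounds(1) by metis
lemma beta_pp: "S_branch V E S H \<Longrightarrow> pp \<le> beta X l H"
  using pp_obt nbr_bounds(2) by metis

lemma pp_range: "1 \<le> pp" "pp \<le> l"
proof -
  obtain s where s: "s \<in> S" "pp = aa s" using pp_obt by blast
  show "1 \<le> pp" "pp \<le> l" using aa_in[OF s(1)] s(2) unfolding J_def by auto
qed
lemma qq_range: "1 \<le> qq" "qq \<le> l"
proof -
  obtain s where s: "s \<in> S" "qq = bb s" using qq_obt by blast
  show "1 \<le> qq" "qq \<le> l" using bb_in[OF s(1)] s(2) unfolding J_def by auto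
qed

lemma S_in: assumes "pp \<le> i" "i \<le> qq" shows "S \<subseteq> X i"
proof
  fix s assume s: "s \<in> S"
  have a: "aa s \<in> J s" "bb s \<in> J s" using aa_in[OF s] bb_in[OF s] by auto
  then have "1 \<le> aa s" "bb s \<le> l" "s \<in> X (aa s)" "s \<in> X (bb s)" unfolding J_def by auto
  moreover have "aa s \<le> i" "i \<le> bb s" using aa_pp[OF s] bb_qq[OF s] assms by simp_all
  ultimately show "s \<in> X i" using interp[of "aa s" i "bb s" s] by simp
qed

definition MM where "MM = Max ((\<lambda>i. card (X i)) ` {1..l})"
lemma card_MM: "i \<in> {1..l} \<Longrightarrow> card (X i) \<le> MM"
  unfolding MM_def by (intro Max_ge) simp_all
lemma width_eq: "pd_width X l = MM - 1" unfolding pd_width_def MM_def by simp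

lemma count_i: assumes i: "i \<in> {1..l}"
  shows "card {H. S_branch V E S H \<and> alpha X l H \<le> i \<and> i \<le> beta X l H} \<le> card (X i - S)"
proof -
  have "{H. S_branch V E S H \<and> alpha X l H \<le> i \<and> i \<le> beta X l H}
      \<subseteq> {H. S_branch V E S H \<and> X i \<inter> H \<noteq> {}}" using contig by blast
  moreover have "finite {H. S_branch V E S H \<and> X i \<inter> H \<noteq> {}}"
    using fin_branches by (rule finite_subset[rotated]) blast
  ultimately have "card {H. S_branch V E S H \<and> alpha X l H \<le> i \<and> i \<le> beta X l H}
      \<le> card {H. S_branch V E S H \<and> X i \<inter> H \<noteq> {}}" by (rule card_mono[rotated])
  then show ?thesis using count_meet[OF i] by simp
qed

lemma cardS: "card S \<ge> 1" using finS Sne by (simp add: Suc_le_eq card_gt_0_iff)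

context
  assumes W: "pd_width X l \<le> 3"
begin

lemma MM4: "MM \<le> 4" using W width_eq by simp

lemma pq: "pp \<le> qq"
proof (rule ccontr)
  assume "\<not> pp \<le> qq"
  then have lt: "qq < pp" by simp
  have qi: "qq \<in> {1..l}" using qq_range by simp
  have "{H. S_branch V E S H} \<subseteq> {H. S_branch V E S H \<and> alpha X l H \<le> qq \<and> qq \<le> beta X l H}"
    using alpha_qq beta_pp lt by (auto intro: less_imp_le order.trans)
  then have "card {H. S_branch V E S H} \<le> card {H. S_branch V E S H \<and> alpha X l H \<le> qq \<and> qq \<le> beta X l H}"
    using fin_branches by (intro card_mono) (auto intro: finite_subset)
  also have "\<dots> \<le> card (X qq - S)" using count_i[OF qi] .
  also have "\<dots> \<le> card (X qq)" using finX[OF qi] by (rule card_mono) blast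
  also have "\<dots> \<le> 4" using card_MM[OF qi] MM4 by simp
  finally show False using many by simp
qed

lemma diff_bound: assumes "i \<in> {1..l}" "S \<subseteq> X i" shows "card (X i - S) \<le> pd_width X l"
proof -
  have "card (X i - S) = card (X i) - card S" using finS assms(2) by (rule card_Diff_subset)
  then show ?thesis using card_MM[OF assms(1)] cardS width_eq by simp
qed

definition Bp where "Bp = {H. S_branch V E S H \<and> alpha X l H \<le> pp}"
definition Bq where "Bq = {H. S_branch V E S H \<and> qq \<le> beta X l H}"

lemma Bp_fin: "finite Bp" unfolding Bp_def using fin_branches by (rule finite_subset[rotated]) blast
lemma Bq_fin: "finite Bq" unfolding Bq_def using fin_branches by (rule finite_subset[rotated]) blast

lemma Bp_card: "card Bp \<le> pd_width X l"
proof -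
  have pi: "pp \<in> {1..l}" using pp_range by simp
  have "Bp \<subseteq> {H. S_branch V E S H \<and> alpha X l H \<le> pp \<and> pp \<le> beta X l H}"
    unfolding Bp_def using beta_pp by blast
  moreover have "finite {H. S_branch V E S H \<and> alpha X l H \<le> pp \<and> pp \<le> beta X l H}"
    using fin_branches by (rule finite_subset[rotated]) blast
  ultimately have "card Bp \<le> card {H. S_branch V E S H \<and> alpha X l H \<le> pp \<and> pp \<le> beta X l H}"
    by (rule card_mono[rotated])
  also have "\<dots> \<le> card (X pp - S)" using count_i[OF pi] .
  also have "\<dots> \<le> pd_width X l" using pi S_in[of pp] pq by (intro diff_bound) auto
  finally show ?thesis .
qed

lemma Bq_card: "card Bq \<le> pd_width X l"
proof -
  have qi: "qq \<in> {1..l}" using qq_range by simp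
  have "Bq \<subseteq> {H. S_branch V E S H \<and> alpha X l H \<le> qq \<and> qq \<le> beta X l H}"
    unfolding Bq_def using alpha_qq by blast
  moreover have "finite {H. S_branch V E S H \<and> alpha X l H \<le> qq \<and> qq \<le> beta X l H}"
    using fin_branches by (rule finite_subset[rotated]) blast
  ultimately have "card Bq \<le> card {H. S_branch V E S H \<and> alpha X l H \<le> qq \<and> qq \<le> beta X l H}"
    by (rule card_mono[rotated])
  also have "\<dots> \<le> card (X qq - S)" using count_i[OF qi] .
  also have "\<dots> \<le> pd_width X l" using qi S_in[of qq] pq by (intro diff_bound) auto
  finally show ?thesis .
qed

lemma inner: "\<exists>H. S_branch V E S H \<and> pp < alpha X l H \<and> beta X l H < qq"
proof (rule ccontr)
  assume nt: "\<not> ?thesis"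
  have "{H. S_branch V E S H} \<subseteq> Bp \<union> Bq"
  proof
    fix H assume "H \<in> {H. S_branch V E S H}"
    then have b: "S_branch V E S H" by simp
    then have "\<not> (pp < alpha X l H \<and> beta X l H < qq)" using nt by blast
    then have "alpha X l H \<le> pp \<or> qq \<le> beta X l H" by linarith
    then show "H \<in> Bp \<union> Bq" unfolding Bp_def Bq_def using b by blast
  qed
  then have "card {H. S_branch V E S H} \<le> card (Bp \<union> Bq)"
    using Bp_fin Bq_fin by (intro card_mono) auto
  also have "\<dots> \<le> card Bp + card Bq" by (rule card_Un_le)
  also have "\<dots> \<le> 6" using Bp_card Bq_card W by simp
  finally show False using many by simp
qed

lemma T1_mem: assumes b: "S_branch V E S H" and lt: "pp < alpha X l H"
  shows "alpha X l H \<in> T1set V E X l S"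
proof -
  let ?a = "alpha X l H"
  have aq: "?a \<le> qq" using alpha_qq[OF b] .
  have "1 \<le> ?a - 1" "?a - 1 \<le> l" "1 \<le> ?a" "?a \<le> l" using pp_range qq_range lt aq by auto
  then have "bag X l ?a = X ?a" "bag X l (?a - 1) = X (?a - 1)" unfolding bag_def by auto
  moreover have "S \<subseteq> X ?a" "S \<subseteq> X (?a - 1)" using S_in lt aq by auto
  ultimately have "S \<subseteq> bag X l ?a \<inter> bag X l (?a - 1)" by simp
  then show ?thesis unfolding T1set_def using b by blast
qed

lemma T2_mem: assumes b: "S_branch V E S H" and lt: "beta X l H < qq"
  shows "beta X l H \<in> T2set V E X l S"
proof -
  let ?a = "beta X l H"
  have aq: "pp \<le> ?a" using beta_pp[OF b] .
  have "1 \<le> ?a + 1" "?a + 1 \<le> l" "1 \<le> ?a" "?a \<le> l" using pp_range qq_range lt aq by auto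
  then have "bag X l ?a = X ?a" "bag X l (?a + 1) = X (?a + 1)" unfolding bag_def by auto
  moreover have "S \<subseteq> X ?a" "S \<subseteq> X (?a + 1)" using S_in lt aq by auto
  ultimately have "S \<subseteq> bag X l ?a \<inter> bag X l (?a + 1)" by simp
  then show ?thesis unfolding T2set_def using b by blast
qed

lemma T1_fin: "finite (T1set V E X l S)"
proof -
  have "T1set V E X l S \<subseteq> alpha X l ` {H. S_branch V E S H}" unfolding T1set_def by blast
  then show ?thesis by (rule finite_subset[OF _ finite_imageI[OF fin_branches]])
qed
lemma T2_fin: "finite (T2set V E X l S)"
proof -
  have "T2set V E X l S \<subseteq> beta X l ` {H. S_branch V E S H}" unfolding T2set_def by blast
  then show ?thesis by (rule finite_subset[OF _ finite_imageI[OF fin_branches]])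
qed

lemma t1_le: "i \<in> T1set V E X l S \<Longrightarrow> t1 V E X l S \<le> i"
  unfolding t1_def using T1_fin by (rule Min_le)
lemma t2_ge: "i \<in> T2set V E X l S \<Longrightarrow> i \<le> t2 V E X l S"
  unfolding t2_def using T2_fin by (rule Max_ge)

lemma main_aux:
  shows "T1set V E X l S \<noteq> {} \<and> T2set V E X l S \<noteq> {}
    \<and> t1 V E X l S \<le> t2 V E X l S \<and> I_S V E X l S \<noteq> {}
    \<and> (\<exists>H. S_branch V E S H \<and> green V E X l S H)
    \<and> card {H. S_branch V E S H \<and> (red V E X l S H \<or> purple V E X l S H \<or> gray V E X l S H)}
        \<le> 2 * pd_width X l
    \<and> card {H. S_branch V E S H \<and> (blue V E X l S H \<or> purple V E X l S H \<or> black V E X l S H)}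
        \<le> 2 * pd_width X l"
proof -
  obtain H0 where H0: "S_branch V E S H0" "pp < alpha X l H0" "beta X l H0 < qq" using inner by blast
  have m1: "alpha X l H0 \<in> T1set V E X l S" using T1_mem H0 by blast
  have m2: "beta X l H0 \<in> T2set V E X l S" using T2_mem H0 by blast
  have g1: "t1 V E X l S \<le> alpha X l H0" using t1_le[OF m1] .
  have g2: "beta X l H0 \<le> t2 V E X l S" using t2_ge[OF m2] .
  have ab: "alpha X l H0 \<le> beta X l H0" using alpha_beta[OF H0(1)] .
  have tt: "t1 V E X l S \<le> t2 V E X l S" using g1 g2 ab by simp
  have gr: "green V E X l S H0" unfolding green_def using g1 g2 ab by simp
  have R: "card {H. S_branch V E S H \<and> (red V E X l S H \<or> purple V E X l S H \<or> gray V E X l S H)}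
        \<le> 2 * pd_width X l"
  proof -
    have "{H. S_branch V E S H \<and> (red V E X l S H \<or> purple V E X l S H \<or> gray V E X l S H)} \<subseteq> Bp"
    proof
      fix H assume "H \<in> {H. S_branch V E S H \<and> (red V E X l S H \<or> purple V E X l S H \<or> gray V E X l S H)}"
      then have b: "S_branch V E S H" and c: "red V E X l S H \<or> purple V E X l S H \<or> gray V E X l S H" by auto
      have "alpha X l H < t1 V E X l S" using c alpha_beta[OF b] unfolding red_def purple_def gray_def by auto
      then have "alpha X l H \<le> pp" using T1_mem[OF b] t1_le by (meson not_le)
      then show "H \<in> Bp" unfolding Bp_def using b by simp
    qed
    then have "card {H. S_branch V E S H \<and> (red V E X l S H \<or> purple V E X l S H \<or> gray V E X l S H)} \<le> card Bp"
      using Bp_fin by (rule card_mono[rotated])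
    then show ?thesis using Bp_card by simp
  qed
  have B: "card {H. S_branch V E S H \<and> (blue V E X l S H \<or> purple V E X l S H \<or> black V E X l S H)}
        \<le> 2 * pd_width X l"
  proof -
    have "{H. S_branch V E S H \<and> (blue V E X l S H \<or> purple V E X l S H \<or> black V E X l S H)} \<subseteq> Bq"
    proof
      fix H assume "H \<in> {H. S_branch V E S H \<and> (blue V E X l S H \<or> purple V E X l S H \<or> black V E X l S H)}"
      then have b: "S_branch V E S H" and c: "blue V E X l S H \<or> purple V E X l S H \<or> black V E X l S H" by auto
      have "t2 V E X l S < beta X l H" using c alpha_beta[OF b] unfolding blue_def purple_def black_def by auto
      then have "qq \<le> beta X l H" using T2_mem[OF b] t2_ge by (meson not_le)
      then show "H \<in> Bq" unfolding Bq_def using b by simp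
    qed
    then have "card {H. S_branch V E S H \<and> (blue V E X l S H \<or> purple V E X l S H \<or> black V E X l S H)} \<le> card Bq"
      using Bq_fin by (rule card_mono[rotated])
    then show ?thesis using Bq_card by simp
  qed
  have "I_S V E X l S \<noteq> {}" unfolding I_S_def using tt by simp
  then show ?thesis using m1 m2 tt gr H0(1) R B by blast
qed

end
end

theorem mainTheorem13:
  fixes V :: "'a set" and E :: "'a \<Rightarrow> 'a \<Rightarrow> bool"
    and X :: "nat \<Rightarrow> 'a set" and l :: nat and S :: "'a set"
  assumes "graph V E" and "connected_graph V E"
    and "path_decomposition V E X l"
    and "pd_width X l \<le> 3"
    and "bottleneck V E S"
  shows "T1set V E X l S \<noteq> {} \<and> T2set V E X l S \<noteq> {}
    \<and> t1 V E X l S \<le> t2 V E X l S \<and> I_S V E X l S \<noteq> {}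
    \<and> (\<exists>H. S_branch V E S H \<and> green V E X l S H)
    \<and> card {H. S_branch V E S H \<and> (red V E X l S H \<or> purple V E X l S H \<or> gray V E X l S H)}
        \<le> 2 * pd_width X l
    \<and> card {H. S_branch V E S H \<and> (blue V E X l S H \<or> purple V E X l S H \<or> black V E X l S H)}
        \<le> 2 * pd_width X l"
  using main_aux[OF assms(1,3,5,4)] .

end
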